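(* Let $g$ be any change of section. Then: (1) for all $\theta\in\mathbb{R}^d$, the matrices $\widehat\mu(\theta)$ and ${}^g\widehat\mu(\theta)$ have the same eigenvalues; in particular ${}^gk(\theta)=k(\theta)$ wherever $k$ is defined; (2) ${}^g\widehat\mu(0)=\widehat\mu(0)$, i.e. the Markovian part of the $g$-changed process has the same transition matrix as the original one; in particular ${}^g\pi=\pi$; (3) ${}^gm=m$; (4) there is no affine hyperplane $H$ of $\mathbb{R}^d$ such that $\operatorname{supp}({}^g\mu)\subset H$, where $\operatorname{supp}({}^g\mu)=\bigcup_{i,j}\operatorname{supp}({}^g\mu_{i,j})$.
   Context: Fix integers $d,p\ge 1$. Let $(Z_n)=(A_n,M_n)$ be a Markov-additive process on $\mathbb{Z}^d\times\{1,\dots,p\}$ (a Markov chain with $\mathbb{P}_{(x,i)}((A_1,M_1)=(x',i'))=\mathbb{P}_{(0,i)}((A_1,M_1)=(x'-x,i'))$), with jump matrix of sub-probability measures $\mu_{i,j}(x)=\mathbb{P}_{(0,i)}((A_1,M_1)=(x,j))$, assumed irreducible, aperiodic (for every state $(x,i)$, $\gcd\{n\ge1:\mathbb{P}_{(x,i)}(Z_n=(x,i))>0\}=1$), and with finite exponential moments ($\sum_x e^{\alpha\|x\|}\mu_{i,j}(x)<\infty$ for all $\alpha>0$). Fourier transform: $\widehat\mu(\theta)_{i,j}=\sum_x e^{\mathbf{i}x\cdot\theta}\mu_{i,j}(x)$; $\widehat\mu(0)$ is the transition matrix of $(M_n)$, with unique stationary distribution $\pi$. Local drifts $m_{i,j}=\sum_x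 x\mu_{i,j}(x)$, global drift $m=\sum_{i,j}\pi_im_{i,j}$. Near $\theta=0$, $k(\theta)$ denotes the unique eigenvalue of maximal modulus of $\widehat\mu(\theta)$ (it is simple). A change of section is a real $p\times d$ matrix $g$ with rows $g_1,\dots,g_p$; the $g$-changed process is the Markov-additive process (with additive part in a countable subset of $\mathbb{R}^d$) with jump measures ${}^g\mu_{i,j}(x)=\mu_{i,j}(x+g_j-g_i)$, $x\in\mathbb{R}^d$. All quantities of the $g$-changed process are defined in the same way and denoted with a left superscript $g$: ${}^g\widehat\mu(\theta)_{i,j}=\sum_{x\in\mathbb{R}^d}e^{\mathbf{i}x\cdot\theta}\,{}^g\mu_{i,j}(x)$, ${}^g\pi$ the stationary distribution of the matrix ${}^g\widehat\mu(0)$, ${}^gm_{i,j}=\sum_x x\,{}^g\mu_{i,j}(x)$, ${}^gm=\sum_{i,j}{}^g\pi_i\,{}^gm_{i,j}$, ${}^gk$ the leading eigenvalue of ${}^g\widehat\mu$. *)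

theory Defs
  imports "HOL-Analysis.Analysis"
begin

text \<open>Markov-additive process on Z^d x P, where the dimension d is the type 'd and
the finite set of modes {1..p} is the finite type 'p.  The jump measures are
mu i j x = P_(0,i)((A_1,M_1) = (x,j)), x :: int^'d.\<close>

definition embed :: "int ^ 'd \<Rightarrow> real ^ 'd" where
  "embed x = (\<chi> k. real_of_int (x $ k))"

definition mak_kernel :: "('p \<Rightarrow> 'p \<Rightarrow> int ^ 'd \<Rightarrow> real) \<Rightarrow> ((int ^ 'd) \<times> 'p) \<Rightarrow> ((int ^ 'd) \<times> 'p) \<Rightarrow> real" where
  "mak_kernel \<mu> s t = \<mu> (snd s) (snd t) (fst t - fst s)"

primrec mak_nstep :: "('p \<Rightarrow> 'p \<Rightarrow> int ^ 'd \<Rightarrow> real) \<Rightarrow> nat \<Rightarrow> ((int ^ 'd) \<times> 'p) \<Rightarrow> ((int ^ 'd) \<times> 'p) \<Rightarrow> real" where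
  "mak_nstep \<mu> 0 s t = (if s = t then 1 else 0)"
| "mak_nstep \<mu> (Suc n) s t = (\<Sum>\<^sub>\<infinity>u. mak_nstep \<mu> n s u * mak_kernel \<mu> u t)"

definition MAP_assms :: "('p::finite \<Rightarrow> 'p \<Rightarrow> int ^ 'd \<Rightarrow> real) \<Rightarrow> bool" where
  "MAP_assms \<mu> \<longleftrightarrow>
     (\<forall>i j x. \<mu> i j x \<ge> 0) \<and>
     (\<forall>i j. \<mu> i j summable_on UNIV) \<and>
     (\<forall>i. (\<Sum>j\<in>UNIV. \<Sum>\<^sub>\<infinity>x. \<mu> i j x) = 1) \<and>
     (\<forall>s t. \<exists>n. mak_nstep \<mu> n s t > 0) \<and>
     (\<forall>s. Gcd {n. n \<ge> 1 \<and> mak_nstep \<mu> n s s > 0} = 1) \<and>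
     (\<forall>\<alpha>>0. \<forall>i j. (\<lambda>x. exp (\<alpha> * norm (embed x)) * \<mu> i j x) summable_on UNIV)"

definition muR :: "('p \<Rightarrow> 'p \<Rightarrow> int ^ 'd \<Rightarrow> real) \<Rightarrow> 'p \<Rightarrow> 'p \<Rightarrow> real ^ 'd \<Rightarrow> real" where
  "muR \<mu> i j y = (if y \<in> range embed then \<mu> i j (inv embed y) else 0)"

definition gmu :: "('p \<Rightarrow> real ^ 'd) \<Rightarrow> ('p \<Rightarrow> 'p \<Rightarrow> int ^ 'd \<Rightarrow> real) \<Rightarrow> 'p \<Rightarrow> 'p \<Rightarrow> real ^ 'd \<Rightarrow> real" where
  "gmu g \<mu> i j y = muR \<mu> i j (y + g j - g i)"

definition fourier :: "('p::finite \<Rightarrow> 'p \<Rightarrow> real ^ 'd \<Rightarrow> real) \<Rightarrow> real ^ 'd \<Rightarrow> complex ^ 'p ^ 'p" where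
  "fourier \<nu> \<theta> = (\<chi> i j. \<Sum>\<^sub>\<infinity>y. exp (\<i> * complex_of_real (y \<bullet> \<theta>)) * complex_of_real (\<nu> i j y))"

definition eigvals :: "complex ^ 'p ^ 'p \<Rightarrow> complex set" where
  "eigvals A = {c. \<exists>v. v \<noteq> 0 \<and> A *v v = c *s v}"

definition leading_eig :: "complex ^ 'p ^ 'p \<Rightarrow> complex" where
  "leading_eig A = (THE c. c \<in> eigvals A \<and> (\<forall>e\<in>eigvals A. e \<noteq> c \<longrightarrow> cmod e < cmod c))"

definition is_stationary :: "complex ^ 'p ^ 'p \<Rightarrow> real ^ 'p \<Rightarrow> bool" where
  "is_stationary A \<pi> \<longleftrightarrow> (\<forall>i. \<pi> $ i \<ge> 0) \<and> (\<Sum>i\<in>UNIV. \<pi> $ i) = 1 \<and>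
     (\<forall>j. (\<Sum>i\<in>UNIV. complex_of_real (\<pi> $ i) * A $ i $ j) = complex_of_real (\<pi> $ j))"

definition stat_dist :: "complex ^ 'p ^ 'p \<Rightarrow> real ^ 'p" where
  "stat_dist A = (THE \<pi>. is_stationary A \<pi>)"

definition local_drift :: "('p \<Rightarrow> 'p \<Rightarrow> real ^ 'd \<Rightarrow> real) \<Rightarrow> 'p \<Rightarrow> 'p \<Rightarrow> real ^ 'd" where
  "local_drift \<nu> i j = (\<Sum>\<^sub>\<infinity>y. \<nu> i j y *\<^sub>R y)"

definition global_drift :: "('p::finite \<Rightarrow> 'p \<Rightarrow> real ^ 'd \<Rightarrow> real) \<Rightarrow> real ^ 'd" where
  "global_drift \<nu> = (let \<pi> = stat_dist (fourier \<nu> 0) in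
     (\<Sum>i\<in>UNIV. \<Sum>j\<in>UNIV. (\<pi> $ i) *\<^sub>R local_drift \<nu> i j))"

definition supp_all :: "('p \<Rightarrow> 'p \<Rightarrow> real ^ 'd \<Rightarrow> real) \<Rightarrow> (real ^ 'd) set" where
  "supp_all \<nu> = {y. \<exists>i j. \<nu> i j y \<noteq> 0}"

end

theory Submission
  imports Defs
begin

lemma embed_inj: "inj embed"
  by (auto simp: inj_def embed_def vec_eq_iff)

lemma embed_diff: "embed (x - y) = embed x - embed y"
  by (auto simp: embed_def vec_eq_iff)

lemma muR_embed[simp]: "muR \<mu> i j (embed x) = \<mu> i j x"
  using embed_inj by (simp add: muR_def inv_f_f[OF embed_inj])

lemma muR_comp[simp]: "muR \<mu> i j \<circ> embed = \<mu> i j"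
  by (rule ext) (simp add: muR_def inv_f_f[OF embed_inj])

lemma transfer_infsum:
  fixes F :: "real ^ 'd \<Rightarrow> 'b::{comm_monoid_add, t2_space}"
  assumes "\<And>y. y \<notin> range embed \<Longrightarrow> F y = 0"
  shows "infsum F UNIV = infsum (F \<circ> embed) UNIV"
proof -
  have "infsum F UNIV = infsum F (range embed)"
    by (rule infsum_cong_neutral) (use assms in auto)
  also have "\<dots> = infsum (F \<circ> embed) UNIV"
    by (rule infsum_reindex) (use embed_inj in auto)
  finally show ?thesis .
qed

lemma transfer_summable:
  fixes F :: "real ^ 'd \<Rightarrow> 'b::{comm_monoid_add, topological_space}"
  assumes "\<And>y. y \<notin> range embed \<Longrightarrow> F y = 0"
  shows "F summable_on UNIV \<longleftrightarrow> (F \<circ> embed) summable_on UNIV"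
proof -
  have "F summable_on UNIV \<longleftrightarrow> F summable_on (range embed)"
    by (rule summable_on_cong_neutral) (use assms in auto)
  also have "\<dots> \<longleftrightarrow> (F \<circ> embed) summable_on UNIV"
    by (rule summable_on_reindex) (use embed_inj in auto)
  finally show ?thesis .
qed

lemma muR_out: "y \<notin> range embed \<Longrightarrow> muR \<mu> i j y = 0"
  by (simp add: muR_def)

lemma transl_bij: "bij_betw (\<lambda>y::real^'d. y + c) UNIV UNIV"
  by (rule bij_betwI[where g="\<lambda>y. y - c"]) auto

lemma fourier_gmu:
  "fourier (gmu g \<mu>) \<theta> $ i $ j = exp (- \<i> * complex_of_real ((g j - g i) \<bullet> \<theta>)) * fourier (muR \<mu>) \<theta> $ i $ j"
proof -
  let ?c = "g j - g i"
  let ?f = "\<lambda>z. exp (- \<i> * complex_of_real (?c \<bullet> \<theta>)) * (exp (\<i> * complex_of_real (z \<bullet> \<theta>)) * complex_of_real (muR \<mu> i j z))"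
  have "fourier (gmu g \<mu>) \<theta> $ i $ j = (\<Sum>\<^sub>\<infinity>y. ?f (y + ?c))"
    unfolding fourier_def gmu_def vec_lambda_beta
  proof (rule infsum_cong)
    fix y
    have e: "y + g j - g i = y + ?c" by (simp add: algebra_simps)
    have "exp (- \<i> * complex_of_real (?c \<bullet> \<theta>)) * exp (\<i> * complex_of_real ((y + ?c) \<bullet> \<theta>))
       = exp (- \<i> * complex_of_real (?c \<bullet> \<theta>) + \<i> * complex_of_real ((y + ?c) \<bullet> \<theta>))"
      by (rule exp_add[symmetric])
    also have "\<dots> = exp (\<i> * complex_of_real (y \<bullet> \<theta>))"
      by (simp add: inner_add_left algebra_simps)
    finally show "exp (\<i> * complex_of_real (y \<bullet> \<theta>)) * complex_of_real (muR \<mu> i j (y + g j - g i)) = ?f (y + ?c)"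
      unfolding e by (simp add: mult.assoc[symmetric])
  qed
  also have "\<dots> = infsum ?f UNIV"
    by (rule infsum_reindex_bij_betw[OF transl_bij])
  also have "\<dots> = exp (- \<i> * complex_of_real (?c \<bullet> \<theta>)) * fourier (muR \<mu>) \<theta> $ i $ j"
    unfolding fourier_def by (subst infsum_cmult_right') simp
  finally show ?thesis .
qed


lemma eig_sim:
  fixes A :: "complex ^ 'p ^ 'p"
  assumes d: "\<And>i. d i \<noteq> 0"
  shows "eigvals A \<subseteq> eigvals (\<chi> i j. d i * A$i$j * inverse (d j))"
proof
  fix c assume "c \<in> eigvals A"
  then obtain v where v: "v \<noteq> 0" "A *v v = c *s v" by (auto simp: eigvals_def)
  define w where "w = (\<chi> j. d j * v$j)"
  have "w \<noteq> 0" using v(1) d by (auto simp: w_def vec_eq_iff)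
  moreover have "(\<chi> i j. d i * A$i$j * inverse (d j)) *v w = c *s w"
  proof -
    { fix i
      have "(\<Sum>j\<in>UNIV. d i * A$i$j * inverse (d j) * (d j * v$j)) = d i * (\<Sum>j\<in>UNIV. A$i$j * v$j)"
        by (simp add: sum_distrib_left d field_simps)
      also have "(\<Sum>j\<in>UNIV. A$i$j * v$j) = c * v$i"
        using v(2) by (simp add: vec_eq_iff matrix_vector_mult_def)
      finally have "(\<Sum>j\<in>UNIV. d i * A$i$j * inverse (d j) * (d j * v$j)) = c * (d i * v $ i)" by simp }
    then show ?thesis by (simp add: vec_eq_iff matrix_vector_mult_def w_def)
  qed
  ultimately show "c \<in> eigvals (\<chi> i j. d i * A$i$j * inverse (d j))" by (auto simp: eigvals_def)
qed

lemma eig_sim_eq: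
  fixes A :: "complex ^ 'p ^ 'p"
  assumes d: "\<And>i. d i \<noteq> 0"
  shows "eigvals (\<chi> i j. d i * A$i$j * inverse (d j)) = eigvals A"
proof
  show "eigvals A \<subseteq> eigvals (\<chi> i j. d i * A$i$j * inverse (d j))" by (rule eig_sim[OF d])
  have "eigvals (\<chi> i j. d i * A$i$j * inverse (d j)) \<subseteq>
     eigvals (\<chi> i j. inverse (d i) * (\<chi> i j. d i * A$i$j * inverse (d j))$i$j * inverse (inverse (d j)))"
    by (rule eig_sim) (use d in auto)
  also have "(\<chi> i j. inverse (d i) * (\<chi> i j. d i * A$i$j * inverse (d j))$i$j * inverse (inverse (d j))) = A"
    using d by (simp add: vec_eq_iff field_simps)
  finally show "eigvals (\<chi> i j. d i * A$i$j * inverse (d j)) \<subseteq> eigvals A" .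
qed

lemma fourier_gmu_sim:
  "fourier (gmu g \<mu>) \<theta> = (\<chi> i j. exp (\<i> * complex_of_real (g i \<bullet> \<theta>)) * fourier (muR \<mu>) \<theta> $i$j
      * inverse (exp (\<i> * complex_of_real (g j \<bullet> \<theta>))))"
proof -
  { fix i j
    have "exp (- \<i> * complex_of_real ((g j - g i) \<bullet> \<theta>)) = exp (\<i> * complex_of_real (g i \<bullet> \<theta>) - \<i> * complex_of_real (g j \<bullet> \<theta>))"
      by (simp add: inner_diff_left algebra_simps)
    also have "\<dots> = exp (\<i> * complex_of_real (g i \<bullet> \<theta>)) * inverse (exp (\<i> * complex_of_real (g j \<bullet> \<theta>)))"
      by (simp add: exp_diff field_simps)
    finally have "fourier (gmu g \<mu>) \<theta> $ i $ j = exp (\<i> * complex_of_real (g i \<bullet> \<theta>)) * fourier (muR \<mu>) \<theta> $i$j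
      * inverse (exp (\<i> * complex_of_real (g j \<bullet> \<theta>)))"
      by (simp add: fourier_gmu) }
  then show ?thesis by (simp add: vec_eq_iff)
qed

lemma eig_part:
  "eigvals (fourier (gmu g \<mu>) \<theta>) = eigvals (fourier (muR \<mu>) \<theta>)"
  unfolding fourier_gmu_sim by (rule eig_sim_eq) simp

lemma four0: "fourier (gmu g \<mu>) 0 = fourier (muR \<mu>) 0"
  by (simp add: vec_eq_iff fourier_gmu)

lemma MAP_summable: "MAP_assms \<mu> \<Longrightarrow> \<mu> i j summable_on UNIV"
  by (simp add: MAP_assms_def)

lemma muR_summable: assumes "MAP_assms \<mu>" shows "muR \<mu> i j summable_on UNIV"
proof -
  have "muR \<mu> i j summable_on UNIV \<longleftrightarrow> (muR \<mu> i j \<circ> embed) summable_on UNIV"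
    by (rule transfer_summable) (rule muR_out)
  then show ?thesis using muR_comp[of \<mu> i j] MAP_summable[OF assms] by metis
qed

lemma muR_infsum: "infsum (muR \<mu> i j) UNIV = infsum (\<mu> i j) UNIV"
proof -
  have "infsum (muR \<mu> i j) UNIV = infsum (muR \<mu> i j \<circ> embed) UNIV"
    by (rule transfer_infsum) (rule muR_out)
  then show ?thesis using muR_comp[of \<mu> i j] by metis
qed

lemma four0_eq: assumes "MAP_assms \<mu>"
  shows "fourier (muR \<mu>) 0 $ i $ j = complex_of_real (infsum (\<mu> i j) UNIV)"
proof -
  have "fourier (muR \<mu>) 0 $ i $ j = (\<Sum>\<^sub>\<infinity>y. complex_of_real (muR \<mu> i j y))"
    by (simp add: fourier_def)
  also have "\<dots> = complex_of_real (infsum (muR \<mu> i j) UNIV)"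
    by (rule infsumI, rule has_sum_of_real, rule has_sum_infsum, rule muR_summable[OF assms])
  finally show ?thesis by (simp add: muR_infsum)
qed

lemma drift_summable: fixes \<mu> :: "'p::finite \<Rightarrow> 'p \<Rightarrow> int ^ 'd \<Rightarrow> real" assumes "MAP_assms \<mu>"
  shows "(\<lambda>y. muR \<mu> i j y *\<^sub>R y) summable_on UNIV"
proof -
  have nn: "\<And>x. \<mu> i j x \<ge> 0" using assms by (simp add: MAP_assms_def)
  have s: "(\<lambda>x. exp (1 * norm (embed x)) * \<mu> i j x) summable_on UNIV"
    using assms unfolding MAP_assms_def by (meson zero_less_one)
  have "(\<lambda>x. norm (\<mu> i j x *\<^sub>R embed x)) summable_on UNIV"
  proof (rule summable_on_comparison_test[OF s])
    fix x :: "int ^ 'd"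
    have "norm (embed x) \<le> exp (norm (embed x))"
      using exp_ge_add_one_self[of "norm (embed x)"] by linarith
    then show "norm (\<mu> i j x *\<^sub>R embed x) \<le> exp (1 * norm (embed x)) * \<mu> i j x"
      using nn[of x] by (simp add: mult_right_mono mult.commute)
  qed simp
  then have "(\<lambda>x. \<mu> i j x *\<^sub>R embed x) summable_on UNIV"
    by (rule abs_summable_summable)
  then show ?thesis
  proof (subst transfer_summable)
    show "\<And>y. y \<notin> range embed \<Longrightarrow> muR \<mu> i j y *\<^sub>R y = 0" by (simp add: muR_out)
  qed (simp add: comp_def)
qed

lemma drift_gmu: assumes "MAP_assms \<mu>"
  shows "local_drift (gmu g \<mu>) i j = local_drift (muR \<mu>) i j - infsum (\<mu> i j) UNIV *\<^sub>R (g j - g i)"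
proof -
  let ?c = "g j - g i"
  let ?f = "\<lambda>z. muR \<mu> i j z *\<^sub>R z + muR \<mu> i j z *\<^sub>R (- ?c)"
  have "local_drift (gmu g \<mu>) i j = (\<Sum>\<^sub>\<infinity>y. ?f (y + ?c))"
    unfolding local_drift_def gmu_def
    by (rule infsum_cong) (simp add: algebra_simps)
  also have "\<dots> = infsum ?f UNIV"
    by (rule infsum_reindex_bij_betw[OF transl_bij])
  also have "\<dots> = local_drift (muR \<mu>) i j + infsum (muR \<mu> i j) UNIV *\<^sub>R (- ?c)"
    unfolding local_drift_def
    by (subst infsum_add) (auto intro!: drift_summable[OF assms] muR_summable[OF assms] infsum_scaleR_left)
  finally show ?thesis by (simp add: muR_infsum algebra_simps)
qed


definition Pm :: "('p \<Rightarrow> 'p \<Rightarrow> int ^ 'd \<Rightarrow> real) \<Rightarrow> 'p \<Rightarrow> 'p \<Rightarrow> real" where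
  "Pm \<mu> i j = infsum (\<mu> i j) UNIV"

lemma Pm_nonneg: "MAP_assms \<mu> \<Longrightarrow> Pm \<mu> i j \<ge> 0"
  unfolding Pm_def by (rule infsum_nonneg) (simp add: MAP_assms_def)

lemma Pm_rows: "MAP_assms \<mu> \<Longrightarrow> (\<Sum>j\<in>UNIV. Pm \<mu> i j) = 1"
  unfolding Pm_def by (simp add: MAP_assms_def)

lemma Pm_pos:
  assumes "MAP_assms \<mu>" "\<mu> a b x > 0" shows "Pm \<mu> a b > 0"
proof -
  have "infsum (\<mu> a b) {x} \<le> infsum (\<mu> a b) UNIV"
    by (rule infsum_mono2) (use assms in \<open>auto simp: MAP_assms_def\<close>)
  then show ?thesis using assms(2) by (simp add: Pm_def)
qed

lemma nstep_nonneg: "MAP_assms \<mu> \<Longrightarrow> mak_nstep \<mu> n s t \<ge> 0"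
proof (induction n arbitrary: t)
  case 0 then show ?case by simp
next
  case (Suc n)
  have k: "mak_kernel \<mu> u t \<ge> 0" for u using Suc.prems by (simp add: mak_kernel_def MAP_assms_def)
  show ?case by simp (rule infsum_nonneg, use Suc k in auto)
qed

lemma nstep_step:
  assumes "MAP_assms \<mu>" "mak_nstep \<mu> (Suc n) s t > 0"
  shows "\<exists>u. mak_nstep \<mu> n s u > 0 \<and> mak_kernel \<mu> u t > 0"
proof (rule ccontr)
  assume nt: "\<not> ?thesis"
  have z: "a * k = 0" if "a \<ge> 0" "k \<ge> 0" "\<not>(a>0 \<and> k>0)" for a k :: real
    using that by auto
  have k: "mak_kernel \<mu> u t \<ge> 0" for u using assms(1) by (simp add: mak_kernel_def MAP_assms_def)
  have "\<And>u. mak_nstep \<mu> n s u * mak_kernel \<mu> u t = 0"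
    by (rule z) (use nstep_nonneg[OF assms(1)] k nt in auto)
  then have "mak_nstep \<mu> (Suc n) s t = 0" by (simp add: infsum_0)
  then show False using assms(2) by simp
qed

lemma reach:
  assumes "MAP_assms \<mu>" "mak_nstep \<mu> n s t > 0"
  shows "(snd s, snd t) \<in> {(a, b). Pm \<mu> a b > 0}\<^sup>*"
  using assms(2)
proof (induction n arbitrary: t)
  case 0 then show ?case by (simp split: if_splits)
next
  case (Suc n)
  obtain u where u: "mak_nstep \<mu> n s u > 0" "mak_kernel \<mu> u t > 0"
    using nstep_step[OF assms(1) Suc.prems] by blast
  have "Pm \<mu> (snd u) (snd t) > 0"
    using u(2) by (intro Pm_pos[OF assms(1)]) (simp add: mak_kernel_def)
  then show ?case using Suc.IH[OF u(1)] by (simp add: rtrancl_into_rtrancl)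
qed

definition stat_r :: "('p::finite \<Rightarrow> 'p \<Rightarrow> int ^ 'd \<Rightarrow> real) \<Rightarrow> real ^ 'p \<Rightarrow> bool" where
  "stat_r \<mu> \<pi> \<longleftrightarrow> (\<forall>i. \<pi> $ i \<ge> 0) \<and> (\<Sum>i\<in>UNIV. \<pi> $ i) = 1 \<and>
     (\<forall>j. (\<Sum>i\<in>UNIV. \<pi> $ i * Pm \<mu> i j) = \<pi> $ j)"

lemma is_stat_iff:
  assumes "MAP_assms \<mu>"
  shows "is_stationary (fourier (muR \<mu>) 0) \<pi> \<longleftrightarrow> stat_r \<mu> \<pi>"
proof -
  have "(\<Sum>i\<in>UNIV. complex_of_real (\<pi> $ i) * fourier (muR \<mu>) 0 $ i $ j) =
        complex_of_real (\<Sum>i\<in>UNIV. \<pi> $ i * Pm \<mu> i j)" for j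
    by (simp add: four0_eq[OF assms] Pm_def)
  then show ?thesis unfolding is_stationary_def stat_r_def by (simp only: of_real_eq_iff)
qed

lemma positivity:
  assumes "MAP_assms \<mu>" "\<forall>i. \<nu> $ i \<ge> 0" "\<forall>j. (\<Sum>i\<in>UNIV. \<nu> $ i * Pm \<mu> i j) = \<nu> $ j"
    and "\<nu> $ a > 0"
  shows "\<nu> $ b > 0"
proof -
  have cl: "\<nu> $ z > 0" if "\<nu> $ y > 0" "Pm \<mu> y z > 0" for y z
  proof -
    have "\<nu> $ y * Pm \<mu> y z \<le> (\<Sum>i\<in>UNIV. \<nu> $ i * Pm \<mu> i z)"
      by (rule member_le_sum) (use assms(2) Pm_nonneg[OF assms(1)] in auto)
    then show ?thesis using assms(3) that by (metis mult_pos_pos order_less_le_trans)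
  qed
  obtain n where "mak_nstep \<mu> n (0, a) (0, b) > 0"
    using assms(1) unfolding MAP_assms_def by blast
  from reach[OF assms(1) this] have "(a, b) \<in> {(a, b). Pm \<mu> a b > 0}\<^sup>*" by simp
  then show ?thesis
  proof (induction rule: rtrancl_induct)
    case base then show ?case by (rule assms(4))
  next
    case (step y z) then show ?case using cl by simp
  qed
qed


lemma stat_exists:
  fixes \<mu> :: "'p::finite \<Rightarrow> 'p \<Rightarrow> int ^ 'd \<Rightarrow> real"
  assumes "MAP_assms \<mu>"
  shows "\<exists>\<pi>. stat_r \<mu> \<pi>"
proof -
  define S :: "(real ^ 'p) set" where "S = {\<pi>. (\<forall>i. 0 \<le> \<pi> $ i) \<and> (\<Sum>i\<in>UNIV. \<pi> $ i) = 1}"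
  define f :: "real ^ 'p \<Rightarrow> real ^ 'p" where "f = (\<lambda>\<pi>. \<chi> j. \<Sum>i\<in>UNIV. \<pi> $ i * Pm \<mu> i j)"
  have "closed S"
    unfolding S_def
    by (intro closed_Collect_conj closed_Collect_all closed_Collect_le closed_Collect_eq)
       (auto intro!: continuous_intros continuous_on_component)
  moreover have "bounded S"
    unfolding bounded_iff
  proof (intro exI ballI)
    fix x assume x: "x \<in> S"
    have "norm x \<le> (\<Sum>i\<in>UNIV. \<bar>x $ i\<bar>)" by (rule norm_le_l1_cart)
    also have "\<dots> = 1" using x by (simp add: S_def)
    finally show "norm x \<le> 1" .
  qed
  ultimately have "compact S" by (simp add: compact_eq_bounded_closed)
  moreover have "convex S"
    unfolding convex_def S_def
    by (auto simp: sum.distrib sum_distrib_left[symmetric])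
  moreover have "(\<chi> i. 1 / real CARD('p)) \<in> S"
    by (simp add: S_def)
  then have "S \<noteq> {}" by blast
  moreover have "continuous_on S f"
    unfolding f_def by (intro continuous_intros continuous_on_component)
  moreover have "f \<in> S \<rightarrow> S"
  proof
    fix \<pi> assume p: "\<pi> \<in> S"
    have "(\<Sum>j\<in>UNIV. \<Sum>i\<in>UNIV. \<pi> $ i * Pm \<mu> i j) = (\<Sum>i\<in>UNIV. \<pi> $ i * (\<Sum>j\<in>UNIV. Pm \<mu> i j))"
      by (subst sum.swap) (simp add: sum_distrib_left)
    also have "\<dots> = 1" using p by (simp add: Pm_rows[OF assms] S_def)
    finally show "f \<pi> \<in> S"
      using p Pm_nonneg[OF assms] by (auto simp: S_def f_def intro!: sum_nonneg)
  qed
  ultimately obtain \<pi> where "\<pi> \<in> S" "f \<pi> = \<pi>" using brouwer by metis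
  then have "stat_r \<mu> \<pi>" by (auto simp: stat_r_def S_def f_def vec_eq_iff)
  then show ?thesis by blast
qed

lemma stat_unique:
  fixes \<mu> :: "'p::finite \<Rightarrow> 'p \<Rightarrow> int ^ 'd \<Rightarrow> real"
  assumes "MAP_assms \<mu>" "stat_r \<mu> \<pi>" "stat_r \<mu> \<rho>"
  shows "\<pi> = \<rho>"
proof -
  have \<rho>0: "\<forall>i. \<rho> $ i \<ge> 0" and \<rho>s: "\<forall>j. (\<Sum>i\<in>UNIV. \<rho> $ i * Pm \<mu> i j) = \<rho> $ j"
    and \<rho>1: "(\<Sum>i\<in>UNIV. \<rho> $ i) = 1" using assms(3) by (auto simp: stat_r_def)
  have \<pi>0: "\<forall>i. \<pi> $ i \<ge> 0" and \<pi>s: "\<forall>j. (\<Sum>i\<in>UNIV. \<pi> $ i * Pm \<mu> i j) = \<pi> $ j"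
    and \<pi>1: "(\<Sum>i\<in>UNIV. \<pi> $ i) = 1" using assms(2) by (auto simp: stat_r_def)
  obtain a where a: "\<rho> $ a > 0"
  proof (rule ccontr)
    assume "\<not> thesis"
    then have "\<forall>i. \<rho> $ i = 0" using \<rho>0 that by (metis less_eq_real_def)
    then show False using \<rho>1 by simp
  qed
  have rpos: "\<rho> $ b > 0" for b by (rule positivity[OF assms(1) \<rho>0 \<rho>s a])
  define c where "c = Min (range (\<lambda>i. \<pi> $ i / \<rho> $ i))"
  obtain i0 where i0: "c = \<pi> $ i0 / \<rho> $ i0"
  proof -
    have "c \<in> range (\<lambda>i. \<pi> $ i / \<rho> $ i)" unfolding c_def by (rule Min_in) auto
    then show ?thesis using that by blast
  qed
  define \<nu> where "\<nu> = \<pi> - c *\<^sub>R \<rho>"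
  have \<nu>0: "\<forall>i. \<nu> $ i \<ge> 0"
  proof
    fix i
    have "c \<le> \<pi> $ i / \<rho> $ i" unfolding c_def by (rule Min_le) auto
    then have "c * \<rho> $ i \<le> \<pi> $ i" using rpos[of i] by (simp add: pos_le_divide_eq)
    then show "\<nu> $ i \<ge> 0" by (simp add: \<nu>_def)
  qed
  have \<nu>s: "\<forall>j. (\<Sum>i\<in>UNIV. \<nu> $ i * Pm \<mu> i j) = \<nu> $ j"
  proof
    fix j
    have "(\<Sum>i\<in>UNIV. \<nu> $ i * Pm \<mu> i j) = (\<Sum>i\<in>UNIV. \<pi> $ i * Pm \<mu> i j) - c * (\<Sum>i\<in>UNIV. \<rho> $ i * Pm \<mu> i j)"
      by (simp add: \<nu>_def algebra_simps sum_subtractf sum_distrib_left)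
    then show "(\<Sum>i\<in>UNIV. \<nu> $ i * Pm \<mu> i j) = \<nu> $ j" using \<pi>s \<rho>s by (simp add: \<nu>_def)
  qed
  have "\<nu> $ i0 = 0" using rpos[of i0] by (simp add: \<nu>_def i0)
  then have "\<forall>b. \<nu> $ b = 0"
    using positivity[OF assms(1) \<nu>0 \<nu>s] by (metis \<nu>0 less_eq_real_def less_irrefl)
  then have pc: "\<pi> = c *\<^sub>R \<rho>" by (simp add: \<nu>_def vec_eq_iff)
  then have "(\<Sum>i\<in>UNIV. \<pi> $ i) = c * (\<Sum>i\<in>UNIV. \<rho> $ i)" by (simp add: sum_distrib_left)
  then have "c = 1" using \<pi>1 \<rho>1 by simp
  then show ?thesis using pc by simp
qed

lemma stat_dist_ok:
  fixes \<mu> :: "'p::finite \<Rightarrow> 'p \<Rightarrow> int ^ 'd \<Rightarrow> real"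
  assumes "MAP_assms \<mu>"
  shows "stat_r \<mu> (stat_dist (fourier (muR \<mu>) 0))"
proof -
  have "\<exists>!\<pi>. is_stationary (fourier (muR \<mu>) 0) \<pi>"
    unfolding is_stat_iff[OF assms] using stat_exists[OF assms] stat_unique[OF assms] by blast
  then have "is_stationary (fourier (muR \<mu>) 0) (stat_dist (fourier (muR \<mu>) 0))"
    unfolding stat_dist_def by (rule theI')
  then show ?thesis using is_stat_iff[OF assms] by blast
qed

lemma drift_algebra:
  fixes \<pi> :: "real ^ 'p::finite" and P :: "'p \<Rightarrow> 'p \<Rightarrow> real" and g :: "'p \<Rightarrow> 'v::real_vector"
  assumes s: "\<forall>j. (\<Sum>i\<in>UNIV. \<pi> $ i * P i j) = \<pi> $ j" and r: "\<forall>i. (\<Sum>j\<in>UNIV. P i j) = 1"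
  shows "(\<Sum>i\<in>UNIV. \<Sum>j\<in>UNIV. \<pi> $ i *\<^sub>R (m i j - P i j *\<^sub>R (g j - g i)))
       = (\<Sum>i\<in>UNIV. \<Sum>j\<in>UNIV. \<pi> $ i *\<^sub>R m i j)"
proof -
  have A: "(\<Sum>i\<in>UNIV. \<Sum>j\<in>UNIV. (\<pi> $ i * P i j) *\<^sub>R g j) = (\<Sum>j\<in>UNIV. \<pi> $ j *\<^sub>R g j)"
    by (subst sum.swap) (simp add: scaleR_sum_left[symmetric] s)
  have B: "(\<Sum>i\<in>UNIV. \<Sum>j\<in>UNIV. (\<pi> $ i * P i j) *\<^sub>R g i) = (\<Sum>i\<in>UNIV. \<pi> $ i *\<^sub>R g i)"
    by (simp add: scaleR_sum_left[symmetric] sum_distrib_left[symmetric] r)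
  have "(\<Sum>i\<in>UNIV. \<Sum>j\<in>UNIV. \<pi> $ i *\<^sub>R (m i j - P i j *\<^sub>R (g j - g i)))
     = (\<Sum>i\<in>UNIV. \<Sum>j\<in>UNIV. \<pi> $ i *\<^sub>R m i j) - (\<Sum>i\<in>UNIV. \<Sum>j\<in>UNIV. (\<pi> $ i * P i j) *\<^sub>R g j)
       + (\<Sum>i\<in>UNIV. \<Sum>j\<in>UNIV. (\<pi> $ i * P i j) *\<^sub>R g i)"
    by (simp add: sum_subtractf sum.distrib scaleR_diff_right algebra_simps)
  then show ?thesis using A B by simp
qed


lemma potential:
  fixes \<mu> :: "'p::finite \<Rightarrow> 'p \<Rightarrow> int ^ 'd \<Rightarrow> real"
  assumes "MAP_assms \<mu>" "supp_all (gmu g \<mu>) \<subseteq> {x. a \<bullet> x = b}" "mak_nstep \<mu> n s t > 0"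
  shows "a \<bullet> embed (fst t) - a \<bullet> g (snd t) = a \<bullet> embed (fst s) - a \<bullet> g (snd s) + real n * b"
  using assms(3)
proof (induction n arbitrary: t)
  case 0 then show ?case by (simp split: if_splits)
next
  case (Suc n)
  obtain u where u: "mak_nstep \<mu> n s u > 0" "mak_kernel \<mu> u t > 0"
    using nstep_step[OF assms(1) Suc.prems] by blast
  define y where "y = embed (fst t - fst u) - g (snd t) + g (snd u)"
  have "y + g (snd t) - g (snd u) = embed (fst t - fst u)" by (simp add: y_def)
  then have "gmu g \<mu> (snd u) (snd t) y = \<mu> (snd u) (snd t) (fst t - fst u)"
    by (simp add: gmu_def)
  then have "gmu g \<mu> (snd u) (snd t) y \<noteq> 0" using u(2) by (simp add: mak_kernel_def)
  then have "y \<in> supp_all (gmu g \<mu>)" unfolding supp_all_def by blast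
  then have "a \<bullet> y = b" using assms(2) by blast
  then have "a \<bullet> embed (fst t) - a \<bullet> embed (fst u) - a \<bullet> g (snd t) + a \<bullet> g (snd u) = b"
    by (simp add: y_def embed_diff inner_diff_right inner_add_right)
  then show ?case using Suc.IH[OF u(1)] by (simp add: algebra_simps)
qed

lemma embed_0: "embed 0 = 0"
  by (simp add: embed_def vec_eq_iff)

lemma embed_axis: "embed (axis k 1) = axis k 1"
  by (simp add: embed_def vec_eq_iff axis_def)

lemma no_hyperplane:
  fixes \<mu> :: "'p::finite \<Rightarrow> 'p \<Rightarrow> int ^ 'd \<Rightarrow> real"
  assumes "MAP_assms \<mu>"
  shows "\<not> (\<exists>a b. a \<noteq> 0 \<and> supp_all (gmu g \<mu>) \<subseteq> {x. a \<bullet> x = b})"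
proof
  assume "\<exists>a b. a \<noteq> 0 \<and> supp_all (gmu g \<mu>) \<subseteq> {x. a \<bullet> x = b}"
  then obtain a b where ab: "a \<noteq> 0" "supp_all (gmu g \<mu>) \<subseteq> {x. a \<bullet> x = b}" by blast
  obtain i0 :: 'p where True by blast
  let ?s = "(0 :: int ^ 'd, i0)"
  have "Gcd {n. n \<ge> 1 \<and> mak_nstep \<mu> n ?s ?s > 0} = 1"
    using assms unfolding MAP_assms_def by blast
  then have "{n. n \<ge> 1 \<and> mak_nstep \<mu> n ?s ?s > 0} \<noteq> {}" by (metis Gcd_empty zero_neq_one)
  then obtain n where n: "n \<ge> 1" "mak_nstep \<mu> n ?s ?s > 0" by blast
  have "real n * b = 0" using potential[OF assms ab(2) n(2)] by simp
  then have b0: "b = 0" using n(1) by simp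
  have "a $ k = 0" for k
  proof -
    obtain m where m: "mak_nstep \<mu> m ?s (axis k 1, i0) > 0"
      using assms unfolding MAP_assms_def by blast
    have "a \<bullet> embed (axis k 1) = 0"
      using potential[OF assms ab(2) m] b0 by (simp add: embed_0)
    then show ?thesis by (simp add: embed_axis cart_eq_inner_axis)
  qed
  then have "a = 0" by (simp add: vec_eq_iff)
  then show False using ab(1) by simp
qed

theorem proposition2p5:
  fixes \<mu> :: "'p::finite \<Rightarrow> 'p \<Rightarrow> int ^ 'd \<Rightarrow> real"
    and g :: "'p \<Rightarrow> real ^ 'd"
  assumes "MAP_assms \<mu>"
  shows "(\<forall>\<theta>. eigvals (fourier (gmu g \<mu>) \<theta>) = eigvals (fourier (muR \<mu>) \<theta>)
             \<and> leading_eig (fourier (gmu g \<mu>) \<theta>) = leading_eig (fourier (muR \<mu>) \<theta>))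
      \<and> fourier (gmu g \<mu>) 0 = fourier (muR \<mu>) 0
      \<and> stat_dist (fourier (gmu g \<mu>) 0) = stat_dist (fourier (muR \<mu>) 0)
      \<and> global_drift (gmu g \<mu>) = global_drift (muR \<mu>)
      \<and> \<not> (\<exists>a b. a \<noteq> 0 \<and> supp_all (gmu g \<mu>) \<subseteq> {x. a \<bullet> x = b})"
proof (intro conjI allI)
  fix \<theta>
  show e: "eigvals (fourier (gmu g \<mu>) \<theta>) = eigvals (fourier (muR \<mu>) \<theta>)" by (rule eig_part)
  show "leading_eig (fourier (gmu g \<mu>) \<theta>) = leading_eig (fourier (muR \<mu>) \<theta>)"
    unfolding leading_eig_def e ..
next
  show "fourier (gmu g \<mu>) 0 = fourier (muR \<mu>) 0" by (rule four0)
  then show "stat_dist (fourier (gmu g \<mu>) 0) = stat_dist (fourier (muR \<mu>) 0)" by simp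
next
  let ?\<pi> = "stat_dist (fourier (muR \<mu>) 0)"
  have st: "stat_r \<mu> ?\<pi>" by (rule stat_dist_ok[OF assms])
  have "global_drift (gmu g \<mu>) = (\<Sum>i\<in>UNIV. \<Sum>j\<in>UNIV. ?\<pi> $ i *\<^sub>R
          (local_drift (muR \<mu>) i j - Pm \<mu> i j *\<^sub>R (g j - g i)))"
    unfolding global_drift_def Let_def four0 by (simp add: drift_gmu[OF assms] Pm_def)
  also have "\<dots> = (\<Sum>i\<in>UNIV. \<Sum>j\<in>UNIV. ?\<pi> $ i *\<^sub>R local_drift (muR \<mu>) i j)"
    by (rule drift_algebra) (use st Pm_rows[OF assms] in \<open>auto simp: stat_r_def\<close>)
  also have "\<dots> = global_drift (muR \<mu>)" unfolding global_drift_def Let_def ..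
  finally show "global_drift (gmu g \<mu>) = global_drift (muR \<mu>)" .
next
  show "\<not> (\<exists>a b. a \<noteq> 0 \<and> supp_all (gmu g \<mu>) \<subseteq> {x. a \<bullet> x = b})"
    by (rule no_hyperplane[OF assms])
qed

end
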